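(* Let $\lambda,\mu,\alpha>0$ and let $\xi(t)$, $t\ge 0$, be the Poisson process with uniform catastrophes with parameters $\lambda,\mu,\alpha$ (defined in the context). Let $\varphi:(0,\infty)\to(0,\infty)$ be a function such that $\lim_{T\to\infty}\varphi(T)/T=\infty$. Then the family of random variables $\xi_T(1):=\xi(T)/\varphi(T)$ satisfies the large deviation principle on $\mathbb{R}$ with normalizing function $\psi(T)=\varphi(T)\ln\frac{\varphi(T)}{T}$ and rate function $$ I_2(x)=\begin{cases}\infty, & x\in(-\infty,0),\\ x, & x\in[0,\infty).\end{cases} $$
   Context: Poisson process with uniform catastrophes: let $\eta(n)$, $n\in\mathbb{Z}^+=\{0,1,2,\dots\}$, be a Markov chain on $\mathbb{Z}^+$ with $\eta(0)=0$ and transition probabilities $\mathbf{P}(\eta(n+1)=j\mid\eta(n)=i)=\frac{\lambda}{\lambda+\mu}$ if $j=i+1$ (and $i\ge 1$), $=\frac{\mu}{i(\lambda+\mu)}$ if $0\le j<i$, $i\neq0$, and $=1$ if $i=0$, $j=1$. Let $\nu(t)$, $t\ge0$, be a Poisson process with rate $\alpha$, independent of $\eta$. Set $\xi(t):=\eta(\nu(t))$. Large deviation principle (LDP): a family of real random variables $X_T$ satisfies the LDP with rate function $I:\mathbb{R}\to[0,\infty]$ and normalizing function $\psi(T)\to\infty$ if for every $c\ge0$ the set $\{x: I(x)\le c\}$ is compact, and for every Borel set $B\subseteq\mathbb{R}$, $\limsup_{T\to\infty}\frac{1}{\psi(T)}\ln\mathbf{P}(X_T\in B)\le -I([B])$ and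 $\liminf_{T\to\infty}\frac{1}{\psi(T)}\ln\mathbf{P}(X_T\in B)\ge -I((B))$, where $[B]$ and $(B)$ denote closure and interior, $I(B)=\inf_{x\in B}I(x)$ and $I(\emptyset)=\infty$. *)

theory Defs
  imports "HOL-Probability.Probability"
begin

text \<open>One step of the Markov chain eta (embedded chain with uniform catastrophes).\<close>
definition eta_step :: "real \<Rightarrow> real \<Rightarrow> nat \<Rightarrow> nat pmf" where
  "eta_step lam mu i =
     (if i = 0 then return_pmf 1
      else bind_pmf (bernoulli_pmf (lam / (lam + mu)))
             (\<lambda>b. if b then return_pmf (i + 1) else pmf_of_set {0..<i}))"

primrec eta_law :: "real \<Rightarrow> real \<Rightarrow> nat \<Rightarrow> nat pmf" where
  "eta_law lam mu 0 = return_pmf 0"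
| "eta_law lam mu (Suc n) = bind_pmf (eta_law lam mu n) (eta_step lam mu)"

text \<open>Law of xi(t) = eta(nu(t)), nu a Poisson process of rate alpha independent of eta:
  nu(t) ~ Poisson(alpha t).\<close>
definition xi_law :: "real \<Rightarrow> real \<Rightarrow> real \<Rightarrow> real \<Rightarrow> nat pmf" where
  "xi_law lam mu alpha t = bind_pmf (poisson_pmf (alpha * t)) (eta_law lam mu)"

definition eln :: "real \<Rightarrow> ereal" where
  "eln p = (if p = 0 then - \<infinity> else ereal (ln p))"

definition LDP :: "(real \<Rightarrow> real measure) \<Rightarrow> (real \<Rightarrow> ereal) \<Rightarrow> (real \<Rightarrow> real) \<Rightarrow> bool" where
  "LDP X I psi \<longleftrightarrow>
     filterlim psi at_top at_top \<and>
     (\<forall>x. I x \<ge> 0) \<and>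
     (\<forall>c::real. c \<ge> 0 \<longrightarrow> compact {x. I x \<le> ereal c}) \<and>
     (\<forall>B \<in> sets borel.
        Limsup at_top (\<lambda>T. eln (measure (X T) B) / ereal (psi T)) \<le> - (INF x\<in>closure B. I x) \<and>
        Liminf at_top (\<lambda>T. eln (measure (X T) B) / ereal (psi T)) \<ge> - (INF x\<in>interior B. I x))"

definition I2 :: "real \<Rightarrow> ereal" where
  "I2 x = (if x < 0 then \<infinity> else ereal x)"

end

theory Submission
  imports Defs
begin


lemma eta_support: "set_pmf (eta_law lam mu n) \<subseteq> {..n}"
proof (induction n)
  case 0 then show ?case by simp
next
  case (Suc n)
  have "set_pmf (eta_step lam mu i) \<subseteq> {..Suc n}" if "i \<le> n" for i
    using that by (auto simp: eta_step_def set_bind_pmf split: if_splits)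
  with Suc show ?case by (auto simp: set_bind_pmf)
qed

lemma pmf_bind_ge: "pmf (bind_pmf p f) x \<ge> pmf p y * pmf (f y) x"
proof -
  have "ennreal (pmf p y * pmf (f y) x) = (\<integral>\<^sup>+z. emeasure (f z) {x} * indicator {y} z \<partial>p)"
    by (simp add: emeasure_pmf_single ennreal_mult' mult.commute)
  also have "\<dots> \<le> (\<integral>\<^sup>+z. emeasure (f z) {x} \<partial>p)"
    by (intro nn_integral_mono) (auto split: split_indicator)
  also have "\<dots> = ennreal (pmf (bind_pmf p f) x)"
    by (simp add: emeasure_pmf_single[symmetric])
  finally show ?thesis by (simp add: ennreal_le_iff)
qed

lemma eta_diag:
  assumes "lam > 0" "mu > 0"
  shows "pmf (eta_law lam mu n) n \<ge> (lam/(lam+mu))^n"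
proof (induction n)
  case 0 then show ?case by simp
next
  case (Suc n)
  define p where "p = lam/(lam+mu)"
  have p01: "0 \<le> p" "p \<le> 1" using assms by (auto simp: p_def)
  have st: "pmf (eta_step lam mu n) (Suc n) \<ge> p"
  proof (cases "n = 0")
    case True then show ?thesis using p01 by (simp add: eta_step_def)
  next
    case False
    have "pmf (eta_step lam mu n) (Suc n) \<ge> pmf (bernoulli_pmf p) True * pmf (return_pmf (n+1)) (Suc n)"
      unfolding eta_step_def using False p_def
      by (simp only: if_False) (rule order.trans[OF _ pmf_bind_ge[where y=True]], simp)
    then show ?thesis using p01 by simp
  qed
  have "pmf (eta_law lam mu (Suc n)) (Suc n) \<ge> pmf (eta_law lam mu n) n * pmf (eta_step lam mu n) (Suc n)"
    by (simp add: pmf_bind_ge)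
  moreover have "pmf (eta_law lam mu n) n * pmf (eta_step lam mu n) (Suc n) \<ge> p^n * p"
    using Suc.IH st p01 unfolding p_def by (intro mult_mono) auto
  ultimately show ?case by (simp add: p_def mult.commute)
qed

lemma bind_tail_le:
  "measure (bind_pmf q (eta_law lam mu)) {n..} \<le> measure q {n..}"
proof -
  have "emeasure (bind_pmf q (eta_law lam mu)) {n..} = (\<integral>\<^sup>+x. emeasure (eta_law lam mu x) {n..} \<partial>q)"
    by simp
  also have "\<dots> \<le> (\<integral>\<^sup>+x. indicator {n..} x \<partial>q)"
  proof (intro nn_integral_mono)
    fix x
    show "emeasure (measure_pmf (eta_law lam mu x)) {n..} \<le> indicator {n..} x"
    proof (cases "n \<le> x")
      case True then show ?thesis by (simp add: measure_pmf.emeasure_le_1)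
    next
      case False
      have "{n..} \<inter> set_pmf (eta_law lam mu x) = {}" using eta_support[of lam mu x] False by auto
      then have "emeasure (measure_pmf (eta_law lam mu x)) {n..} = 0"
        by (simp add: measure_pmf_zero_iff measure_pmf.emeasure_eq_measure Int_commute)
      then show ?thesis by simp
    qed
  qed
  also have "\<dots> = emeasure q {n..}" by simp
  finally show ?thesis by (simp add: measure_pmf.emeasure_eq_measure)
qed


lemma fact_add_ge: "fact j * fact n \<le> (fact (j+n) :: real)"
proof -
  have e: "fact n * fact j * real ((j+n) choose n) = (fact (j+n) :: real)"
  proof -
    have "fact n * fact (j + n - n) * ((j+n) choose n) = (fact (j+n) :: nat)"
      by (rule binomial_fact_lemma) simp
    then have "real (fact n * fact j * ((j+n) choose n)) = real (fact (j+n))" by simp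
    then show ?thesis by (simp only: of_nat_mult of_nat_fact)
  qed
  have c: "real ((j+n) choose n) \<ge> 1" by (simp add: Suc_leI)
  have "fact j * fact n * 1 \<le> fact j * fact n * real ((j+n) choose n)"
    using c by (intro mult_left_mono) auto
  also have "\<dots> = fact (j+n)" using e by (simp add: ac_simps)
  finally show ?thesis by simp
qed

lemma poisson_tail:
  assumes m: "0 < m"
  shows "measure (poisson_pmf m) {n..} \<le> m^n / fact n"
proof -
  have U: "{n..} = (\<Union>j. {j+n})"
  proof (intro set_eqI iffI)
    fix x assume "x \<in> {n..}"
    then have "x = (x - n) + n" by simp
    then show "x \<in> (\<Union>j. {j+n})" by blast
  qed auto
  have "emeasure (poisson_pmf m) {n..} = (\<Sum>j. emeasure (poisson_pmf m) {j+n})"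
    unfolding U by (rule suminf_emeasure[symmetric]) (auto simp: disjoint_family_on_def)
  also have "\<dots> = (\<Sum>j. ennreal (m^(j+n) / fact (j+n) * exp (-m)))"
    using m by (simp add: emeasure_pmf_single)
  also have "\<dots> \<le> (\<Sum>j. ennreal ((m^n / fact n * exp (-m)) * (m^j / fact j)))"
  proof (intro suminf_le summableI allI ennreal_leI)
    fix j
    have "m^(j+n) / fact (j+n) \<le> m^(j+n) / (fact j * fact n)"
      using fact_add_ge[of j n] m by (intro divide_left_mono) auto
    then have "m^(j+n) / fact (j+n) * exp (-m) \<le> m^(j+n) / (fact j * fact n) * exp (-m)"
      by (rule mult_right_mono) simp
    then show "m^(j+n) / fact (j+n) * exp (-m) \<le> (m^n / fact n * exp (-m)) * (m^j / fact j)"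
      by (simp add: power_add ac_simps)
  qed
  also have "\<dots> = ennreal ((m^n / fact n * exp (-m)) * exp m)"
  proof (rule suminf_ennreal_eq)
    show "\<And>i. 0 \<le> m ^ n / fact n * exp (- m) * (m ^ i / fact i)" using m by auto
    show "(\<lambda>i. m ^ n / fact n * exp (- m) * (m ^ i / fact i)) sums (m ^ n / fact n * exp (- m) * exp m)"
      using sums_mult[OF exp_converges[of m], of "m ^ n / fact n * exp (- m)"]
      by (simp add: divide_inverse mult.commute scaleR_conv_of_real)
  qed
  also have "\<dots> = ennreal (m^n / fact n)" by (simp add: exp_minus field_simps)
  finally have "ennreal (measure (poisson_pmf m) {n..}) \<le> ennreal (m^n / fact n)"
    by (simp add: measure_pmf.emeasure_eq_measure)
  then show ?thesis using m by (subst (asm) ennreal_le_iff) auto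
qed

lemma pow_le_exp_fact: "(x::real) \<ge> 0 \<Longrightarrow> x^n / fact n \<le> exp x"
proof -
  assume x: "x \<ge> 0"
  have s: "(\<lambda>k. x^k / fact k) sums exp x"
    using exp_converges[of x] by (simp add: divide_inverse mult.commute scaleR_conv_of_real)
  have "sum (\<lambda>k. x^k / fact k) {n} \<le> suminf (\<lambda>k. x^k / fact k)"
    using s x by (intro sum_le_suminf) (auto simp: sums_iff)
  then show ?thesis using s by (simp add: sums_iff)
qed


lemma eln_mono: "0 \<le> x \<Longrightarrow> x \<le> y \<Longrightarrow> eln x \<le> eln y"
  by (auto simp: eln_def)

lemma eln_le0: "0 \<le> x \<Longrightarrow> x \<le> 1 \<Longrightarrow> eln x \<le> 0"
  by (auto simp: eln_def)

lemma eln_div_pos: "x > 0 \<Longrightarrow> s > 0 \<Longrightarrow> eln x / ereal s = ereal (ln x / s)"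
  by (simp add: eln_def)

lemma eln_div_zero: "s > 0 \<Longrightarrow> eln 0 / ereal s = - \<infinity>"
  by (simp add: eln_def)

lemma ereal_div_pos_mono: "(a::ereal) \<le> b \<Longrightarrow> s > 0 \<Longrightarrow> a / ereal s \<le> b / ereal s"
  by (simp add: ereal_divide_right_mono)

lemma asym:
  fixes phi :: "real \<Rightarrow> real"
  assumes "\<forall>T>0. phi T > 0"
    and r: "filterlim (\<lambda>T. phi T / T) at_top at_top"
  shows "filterlim phi at_top at_top"
    and "filterlim (\<lambda>T. ln (phi T / T)) at_top at_top"
    and "filterlim (\<lambda>T. phi T * ln (phi T / T)) at_top at_top"
proof -
  have lim: "filterlim (\<lambda>T. (phi T / T) * T) at_top at_top"
    by (rule filterlim_at_top_mult_at_top[OF r filterlim_ident])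
  have ev: "eventually (\<lambda>T. (phi T / T) * T = phi T) at_top"
    using eventually_gt_at_top[of 0] by eventually_elim simp
  show p: "filterlim phi at_top at_top"
    using filterlim_cong[OF refl refl ev] lim by simp
  show l: "filterlim (\<lambda>T. ln (phi T / T)) at_top at_top"
    by (rule filterlim_compose[OF ln_at_top r])
  show "filterlim (\<lambda>T. phi T * ln (phi T / T)) at_top at_top"
    by (rule filterlim_at_top_mult_at_top[OF p l])
qed


lemma upper_point:
  assumes al: "alpha > 0" and a: "a > 0" and T: "T > 0" and ph: "ph > 0"
    and c1: "exp 1 * (alpha * T) / (a * ph) < 1"
  shows "eln (measure (xi_law lam mu alpha T) {k. a * ph \<le> real k})
           \<le> ereal (a * ph * ln (exp 1 * (alpha * T) / (a * ph)))"
proof -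
  define m where "m = alpha * T"
  define c where "c = exp 1 * m / (a * ph)"
  define n where "n = nat \<lceil>a * ph\<rceil>"
  define P where "P = measure (xi_law lam mu alpha T) {k. a * ph \<le> real k}"
  have m: "m > 0" using al T by (simp add: m_def)
  have c0: "c > 0" "c < 1" using c1 m a ph by (auto simp: c_def m_def)
  have set: "{k. a * ph \<le> real k} = {n..}"
    by (auto simp: n_def nat_ceiling_le_eq)
  have nge: "real n \<ge> a * ph" unfolding n_def by (rule real_nat_ceiling_ge)
  have n1: "real n > 0" using nge a ph by (meson mult_pos_pos order_less_le_trans)
  have "P \<le> measure (poisson_pmf m) {n..}"
    unfolding P_def set xi_law_def m_def by (rule bind_tail_le)
  also have "\<dots> \<le> m^n / fact n" by (rule poisson_tail[OF m])
  also have "\<dots> \<le> (exp 1 * m / real n)^n"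
  proof -
    have f: "real n ^ n / fact n \<le> exp (real n)" by (rule pow_le_exp_fact) simp
    have e: "exp (real n) = exp 1 ^ n" by (metis exp_of_nat_mult mult.right_neutral)
    have "real n ^ n \<le> exp 1 ^ n * fact n" using f e by (simp add: divide_le_eq)
    then have "m^n * real n ^ n \<le> m^n * (exp 1 ^ n * fact n)"
      using m by (intro mult_left_mono) auto
    then have "m^n / fact n \<le> (m^n * exp 1 ^ n) / real n ^ n"
      using n1 by (simp add: field_simps)
    then show ?thesis by (simp add: power_divide power_mult_distrib mult.commute)
  qed
  also have "\<dots> \<le> c^n"
  proof (rule power_mono)
    show "exp 1 * m / real n \<le> c" unfolding c_def
      using nge m a ph n1 by (intro divide_left_mono) auto
  qed (use m n1 in auto)
  finally have Pc: "P \<le> c^n" .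
  show ?thesis
  proof (cases "P = 0")
    case True then show ?thesis by (simp add: P_def eln_def)
  next
    case False
    then have P0: "P > 0" by (simp add: P_def zero_less_measure_iff)
    have "ln P \<le> ln (c^n)" using Pc P0 by simp
    also have "\<dots> = real n * ln c" using c0 by (simp add: ln_realpow)
    also have "\<dots> \<le> a * ph * ln c"
      using nge c0 by (intro mult_right_mono_neg) auto
    finally show ?thesis using False by (simp add: P_def eln_def c_def m_def)
  qed
qed


lemma xlnx_mono: "0 < (c::real) \<Longrightarrow> c \<le> s \<Longrightarrow> s \<le> t \<Longrightarrow> s * ln (s / c) \<le> t * ln (t / c)"
proof -
  assume h: "0 < c" "c \<le> s" "s \<le> t"
  have "1 \<le> s / c" using h by (subst le_divide_eq_1_pos) auto
  then have "0 \<le> ln (s / c)" by (rule ln_ge_zero)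
  moreover have "ln (s / c) \<le> ln (t / c)" using h by (simp add: divide_right_mono)
  ultimately show ?thesis using h by (intro mult_mono) auto
qed

lemma lower_point:
  assumes lam: "lam > 0" and mu: "mu > 0" and al: "alpha > 0" and y: "y > 0" and T: "T > 0"
    and ph: "ph > 0" and mp: "alpha * (lam/(lam+mu)) * T \<le> y * ph"
  shows "pmf (xi_law lam mu alpha T) (nat \<lceil>y * ph\<rceil>) > 0"
    and "ln (pmf (xi_law lam mu alpha T) (nat \<lceil>y * ph\<rceil>))
           \<ge> - (alpha * T) - (y * ph + 1) * ln ((y * ph + 1) / (alpha * (lam/(lam+mu)) * T))"
proof -
  define p where "p = lam/(lam+mu)"
  define m where "m = alpha * T"
  define k where "k = nat \<lceil>y * ph\<rceil>"
  define Q where "Q = pmf (xi_law lam mu alpha T) k"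
  define R where "R = (m^k / fact k * exp (-m)) * p^k"
  have p: "p > 0" "p \<le> 1" using lam mu by (auto simp: p_def)
  have m: "m > 0" using al T by (simp add: m_def)
  have kge: "real k \<ge> y * ph" unfolding k_def by (rule real_nat_ceiling_ge)
  have kle: "real k \<le> y * ph + 1"
  proof -
    have "y * ph \<ge> 0" using y ph by simp
    then have "real k = real_of_int \<lceil>y * ph\<rceil>" by (simp add: k_def)
    then show ?thesis using ceiling_correct[of "y * ph"] by linarith
  qed
  have k1: "real k \<ge> 1" using kge y ph
    by (metis k_def mult_pos_pos nat_ceiling_le_eq not_le of_nat_0_less_iff less_one order.strict_trans2 of_nat_1 of_nat_less_iff)
  have R0: "R > 0" using m p by (simp add: R_def)
  have "Q \<ge> pmf (poisson_pmf m) k * pmf (eta_law lam mu k) k"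
    unfolding Q_def xi_law_def m_def by (rule pmf_bind_ge)
  moreover have "pmf (poisson_pmf m) k * pmf (eta_law lam mu k) k \<ge> R"
    unfolding R_def using m p eta_diag[OF lam mu, of k] unfolding p_def[symmetric]
    by (intro mult_mono) auto
  ultimately have QR: "Q \<ge> R" by linarith
  then show "pmf (xi_law lam mu alpha T) (nat \<lceil>y * ph\<rceil>) > 0" using R0 by (simp add: Q_def k_def)
  have "ln (fact k) \<le> ln (real k ^ k)"
    using fact_le_power[of k, where 'a=real] by (intro ln_mono) auto
  also have "\<dots> = real k * ln (real k)" using k1 by (simp add: ln_realpow)
  finally have lf: "ln (fact k) \<le> real k * ln (real k)" .
  have "ln R = real k * ln m - ln (fact k) - m + real k * ln p"
    using m p by (simp add: R_def ln_mult ln_div ln_realpow)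
  also have "\<dots> \<ge> - m - real k * ln (real k / (m * p))"
    using lf m p k1 by (simp add: ln_div ln_mult algebra_simps)
  finally have lR: "ln R \<ge> - m - real k * ln (real k / (m * p))" .
  have "real k * ln (real k / (m * p)) \<le> (y * ph + 1) * ln ((y * ph + 1) / (m * p))"
  proof (rule xlnx_mono)
    show "0 < m * p" using m p by simp
    show "m * p \<le> real k" using mp kge by (simp add: m_def p_def mult_ac)
  qed (rule kle)
  moreover have "ln Q \<ge> ln R" using QR R0 by simp
  ultimately show "ln (pmf (xi_law lam mu alpha T) (nat \<lceil>y * ph\<rceil>))
           \<ge> - (alpha * T) - (y * ph + 1) * ln ((y * ph + 1) / (alpha * (lam/(lam+mu)) * T))"
    using lR by (simp add: Q_def k_def m_def p_def mult_ac)
qed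


lemma ev_basic:
  fixes phi :: "real \<Rightarrow> real"
  assumes pos: "\<forall>T>0. phi T > 0"
    and r: "filterlim (\<lambda>T. phi T / T) at_top at_top"
  shows "eventually (\<lambda>T. 0 < T \<and> 0 < phi T \<and> 0 < ln (phi T / T) \<and> 0 < phi T * ln (phi T / T)) at_top"
proof -
  have "eventually (\<lambda>T. 1 < phi T / T) at_top" using r by (simp add: filterlim_at_top_dense)
  then show ?thesis using eventually_gt_at_top[of 0]
    by eventually_elim (use pos in auto)
qed

lemma upper_bound:
  fixes phi :: "real \<Rightarrow> real"
  assumes al: "alpha > 0"
    and pos: "\<forall>T>0. phi T > 0"
    and r: "filterlim (\<lambda>T. phi T / T) at_top at_top"
  shows "Limsup at_top (\<lambda>T. eln (measure (xi_law lam mu alpha T) ((\<lambda>k. real k / phi T) -` B))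
              / ereal (phi T * ln (phi T / T))) \<le> - (INF x\<in>closure B. I2 x)"
proof -
  define F where "F = (\<lambda>T. eln (measure (xi_law lam mu alpha T) ((\<lambda>k. real k / phi T) -` B))
              / ereal (phi T * ln (phi T / T)))"
  define S where "S = closure B \<inter> {0..}"
  have evb: "eventually (\<lambda>T. 0 < T \<and> 0 < phi T \<and> 0 < ln (phi T / T) \<and> 0 < phi T * ln (phi T / T)) at_top"
    by (rule ev_basic[OF pos r])
  have inS: "real k / phi T \<in> S" if "real k / phi T \<in> B" "phi T > 0" for k T
    using that closure_subset by (auto simp: S_def)
  show ?thesis
  proof (cases "S = {}")
    case True
    have "eventually (\<lambda>T. F T = - \<infinity>) at_top"
      using evb
    proof eventually_elim
      case (elim T)
      then have "(\<lambda>k. real k / phi T) -` B = {}" using inS True by blast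
      then show ?case using elim by (simp add: F_def eln_div_zero)
    qed
    then have "eventually (\<lambda>T. F T \<le> (- \<infinity> :: ereal)) at_top" by (auto elim: eventually_mono)
    then have "Limsup at_top F \<le> (- \<infinity> :: ereal)" by (rule Limsup_bounded)
    then show ?thesis by (simp add: F_def)
  next
    case False
    define a where "a = Inf S"
    have bdd: "bdd_below S" by (auto simp: S_def bdd_below_def)
    have aS: "a \<in> S" unfolding a_def
      by (rule closed_contains_Inf[OF False bdd]) (auto simp: S_def intro: closed_Int)
    have a0: "a \<ge> 0" using aS by (auto simp: S_def)
    have "(INF x\<in>closure B. I2 x) \<le> I2 a" using aS by (auto simp: S_def intro: INF_lower)
    also have "I2 a = ereal a" using a0 by (simp add: I2_def)
    finally have INFa: "- ereal a \<le> - (INF x\<in>closure B. I2 x)" by (simp only: ereal_minus_le_minus)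
    have "Limsup at_top F \<le> - ereal a"
    proof (cases "a = 0")
      case True
      have "eventually (\<lambda>T. F T \<le> 0) at_top"
        using evb
      proof eventually_elim
        case (elim T)
        have "eln (measure (xi_law lam mu alpha T) ((\<lambda>k. real k / phi T) -` B)) \<le> 0"
          by (rule eln_le0) auto
        then have "F T \<le> 0 / ereal (phi T * ln (phi T / T))"
          unfolding F_def using elim by (intro ereal_div_pos_mono) auto
        then show ?case by simp
      qed
      then have "Limsup at_top F \<le> 0" by (rule Limsup_bounded)
      then show ?thesis using True by (simp add: zero_ereal_def)
    next
      case False
      then have a: "a > 0" using a0 by simp
      define g where "g = (\<lambda>T. a * (1 + ln (alpha / a)) * inverse (ln (phi T / T)) - a)"
      have ev2: "eventually (\<lambda>T. exp 1 * alpha / a < phi T / T) at_top"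
        using r by (simp add: filterlim_at_top_dense)
      have "eventually (\<lambda>T. F T \<le> ereal (g T)) at_top"
        using evb ev2
      proof eventually_elim
        case (elim T)
        define ph where "ph = phi T"
        have T: "T > 0" and ph: "ph > 0" and lr: "ln (ph / T) > 0" and ps: "ph * ln (ph / T) > 0"
          using elim by (auto simp: ph_def)
        have c1: "exp 1 * (alpha * T) / (a * ph) < 1"
          using elim(2) T ph a by (simp add: ph_def field_simps)
        have sub: "(\<lambda>k. real k / phi T) -` B \<subseteq> {k. a * ph \<le> real k}"
        proof
          fix k assume "k \<in> (\<lambda>k. real k / phi T) -` B"
          then have "real k / ph \<in> S" using inS ph by (auto simp: ph_def)
          then have "a \<le> real k / ph" unfolding a_def using bdd by (rule cInf_lower)
          then show "k \<in> {k. a * ph \<le> real k}" using ph by (simp add: field_simps)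
        qed
        have "eln (measure (xi_law lam mu alpha T) ((\<lambda>k. real k / phi T) -` B))
              \<le> eln (measure (xi_law lam mu alpha T) {k. a * ph \<le> real k})"
          by (rule eln_mono) (auto intro: measure_pmf.finite_measure_mono[OF sub])
        also have "\<dots> \<le> ereal (a * ph * ln (exp 1 * (alpha * T) / (a * ph)))"
          by (rule upper_point[OF al a T ph c1])
        finally have "F T \<le> ereal (a * ph * ln (exp 1 * (alpha * T) / (a * ph))) / ereal (ph * ln (ph / T))"
          unfolding F_def ph_def using ps[unfolded ph_def] by (intro ereal_div_pos_mono) auto
        also have "\<dots> = ereal (a * ph * ln (exp 1 * (alpha * T) / (a * ph)) / (ph * ln (ph / T)))"
          using ps lr ph by simp
        also have "a * ph * ln (exp 1 * (alpha * T) / (a * ph)) / (ph * ln (ph / T)) = g T"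
        proof -
          have "exp 1 * (alpha * T) / (a * ph) = exp 1 * (alpha / a) / (ph / T)"
            using T ph a by (simp add: field_simps)
          then have eqL: "ln (exp 1 * (alpha * T) / (a * ph)) = 1 + ln (alpha / a) - ln (ph / T)"
            using T ph a al by (simp add: ln_mult ln_div)
          show ?thesis unfolding g_def ph_def[symmetric] eqL using ph lr
            by (simp add: field_simps)
        qed
        finally show ?case .
      qed
      then have "Limsup at_top F \<le> Limsup at_top (\<lambda>T. ereal (g T))" by (rule Limsup_mono)
      also have "Limsup at_top (\<lambda>T. ereal (g T)) = ereal (- a)"
      proof (rule lim_imp_Limsup)
        have i: "((\<lambda>T. inverse (ln (phi T / T))) \<longlongrightarrow> 0) at_top"
          by (rule tendsto_inverse_0_at_top[OF asym(2)[OF pos r]])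
        have "(g \<longlongrightarrow> a * (1 + ln (alpha / a)) * 0 - a) at_top"
          unfolding g_def by (intro tendsto_intros i)
        then show "((\<lambda>T. ereal (g T)) \<longlongrightarrow> ereal (- a)) at_top"
          by (intro tendsto_ereal) simp
      qed simp
      finally show ?thesis by simp
    qed
    then show ?thesis using INFa unfolding F_def by (rule order.trans)
  qed
qed


lemma lower_core:
  fixes phi :: "real \<Rightarrow> real"
  assumes lam: "lam > 0" and mu: "mu > 0" and al: "alpha > 0"
    and pos: "\<forall>T>0. phi T > 0"
    and r: "filterlim (\<lambda>T. phi T / T) at_top at_top"
    and y: "y > 0" and d: "d > 0" and B: "\<And>z. \<bar>z - y\<bar> < d \<Longrightarrow> z \<in> B"
  shows "- ereal y \<le> Liminf at_top (\<lambda>T. eln (measure (xi_law lam mu alpha T) ((\<lambda>k. real k / phi T) -` B))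
              / ereal (phi T * ln (phi T / T)))"
proof -
  define F where "F = (\<lambda>T. eln (measure (xi_law lam mu alpha T) ((\<lambda>k. real k / phi T) -` B))
              / ereal (phi T * ln (phi T / T)))"
  define p where "p = lam / (lam + mu)"
  have p: "p > 0" using lam mu by (simp add: p_def)
  define h where "h = (\<lambda>T. - (alpha * inverse (phi T / T) * inverse (ln (phi T / T)))
      - (y + inverse (phi T)) * (1 + ln ((y + inverse (phi T)) / (alpha * p)) * inverse (ln (phi T / T))))"
  have evb: "eventually (\<lambda>T. 0 < T \<and> 0 < phi T \<and> 0 < ln (phi T / T) \<and> 0 < phi T * ln (phi T / T)) at_top"
    by (rule ev_basic[OF pos r])
  have ev2: "eventually (\<lambda>T. alpha * p / y < phi T / T) at_top"
    using r by (simp add: filterlim_at_top_dense)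
  have ev3: "eventually (\<lambda>T. 1 / d < phi T) at_top"
    using asym(1)[OF pos r] by (simp add: filterlim_at_top_dense)
  have "eventually (\<lambda>T. ereal (h T) \<le> F T) at_top"
    using evb ev2 ev3
  proof eventually_elim
    case (elim T)
    define ph where "ph = phi T"
    define k where "k = nat \<lceil>y * ph\<rceil>"
    have T: "T > 0" and ph: "ph > 0" and lr: "ln (ph / T) > 0" and ps: "ph * ln (ph / T) > 0"
      using elim by (auto simp: ph_def)
    have mp: "alpha * (lam/(lam+mu)) * T \<le> y * ph"
      using elim(2) T y ph unfolding p_def[symmetric] ph_def[symmetric] by (simp add: field_simps)
    have kge: "real k \<ge> y * ph" unfolding k_def by (rule real_nat_ceiling_ge)
    have kle: "real k \<le> y * ph + 1"
    proof -
      have "y * ph \<ge> 0" using y ph by simp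
      then have "real k = real_of_int \<lceil>y * ph\<rceil>" by (simp add: k_def)
      then show ?thesis using ceiling_correct[of "y * ph"] by linarith
    qed
    have "1 / ph < d" using elim(3) ph d unfolding ph_def[symmetric] by (simp add: field_simps)
    moreover have "y \<le> real k / ph" "real k / ph \<le> y + 1 / ph"
      using kge kle ph by (auto simp: field_simps)
    ultimately have "\<bar>real k / ph - y\<bar> < d" by linarith
    then have kin: "k \<in> (\<lambda>k. real k / phi T) -` B" using B by (simp add: ph_def)
    note lp = lower_point[OF lam mu al y T ph mp]
    define Q where "Q = pmf (xi_law lam mu alpha T) k"
    have Q0: "Q > 0" using lp(1) by (simp add: Q_def k_def)
    have "Q \<le> measure (xi_law lam mu alpha T) ((\<lambda>k. real k / phi T) -` B)"
      unfolding Q_def measure_pmf_single[symmetric] using kin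
      by (intro measure_pmf.finite_measure_mono) auto
    then have "eln Q \<le> eln (measure (xi_law lam mu alpha T) ((\<lambda>k. real k / phi T) -` B))"
      using Q0 by (intro eln_mono) auto
    then have "eln Q / ereal (ph * ln (ph / T)) \<le> F T"
      unfolding F_def ph_def using ps[unfolded ph_def] by (intro ereal_div_pos_mono) auto
    moreover have "eln Q / ereal (ph * ln (ph / T)) = ereal (ln Q / (ph * ln (ph / T)))"
      using Q0 ps by (rule eln_div_pos)
    moreover have "ln Q / (ph * ln (ph / T)) \<ge> h T"
    proof -
      define L where "L = ln ((y + inverse ph) / (alpha * p))"
      have eq0: "(y * ph + 1) / (alpha * p * T) = (ph / T) * ((y + inverse ph) / (alpha * p))"
        using ph T al p by (simp add: field_simps)
      have yi: "y + inverse ph > 0" using y ph by (simp add: add_pos_pos)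
      have eq: "ln ((y * ph + 1) / (alpha * p * T)) = ln (ph / T) + L"
        unfolding L_def eq0 by (rule ln_mult_pos) (use ph T al p yi in auto)
      have low: "ln Q \<ge> - (alpha * T) - (y * ph + 1) * (ln (ph / T) + L)"
        using lp(2) eq unfolding p_def[symmetric] by (simp add: Q_def k_def)
      have "h T = (- (alpha * T) - (y * ph + 1) * (ln (ph / T) + L)) / (ph * ln (ph / T))"
        unfolding h_def ph_def[symmetric] L_def[symmetric] using ph T lr
        by (simp add: field_simps)
      also have "\<dots> \<le> ln Q / (ph * ln (ph / T))"
        using low ps by (intro divide_right_mono) auto
      finally show ?thesis .
    qed
    ultimately show ?case by (metis ereal_less_eq(3) order.trans)
  qed
  then have "Liminf at_top (\<lambda>T. ereal (h T)) \<le> Liminf at_top F" by (rule Liminf_mono)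
  moreover have "Liminf at_top (\<lambda>T. ereal (h T)) = ereal (- y)"
  proof (rule lim_imp_Liminf)
    have i1: "((\<lambda>T. inverse (ln (phi T / T))) \<longlongrightarrow> 0) at_top"
      by (rule tendsto_inverse_0_at_top[OF asym(2)[OF pos r]])
    have i2: "((\<lambda>T. inverse (phi T / T)) \<longlongrightarrow> 0) at_top"
      by (rule tendsto_inverse_0_at_top[OF r])
    have i3: "((\<lambda>T. inverse (phi T)) \<longlongrightarrow> 0) at_top"
      by (rule tendsto_inverse_0_at_top[OF asym(1)[OF pos r]])
    have "(h \<longlongrightarrow> - (alpha * 0 * 0) - (y + 0) * (1 + ln ((y + 0) / (alpha * p)) * 0)) at_top"
      unfolding h_def using y al p by (intro tendsto_intros i1 i2 i3) auto
    then show "((\<lambda>T. ereal (h T)) \<longlongrightarrow> ereal (- y)) at_top"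
      by (intro tendsto_ereal) simp
  qed simp
  ultimately show ?thesis by (simp add: F_def)
qed


theorem theorem2p4:
  fixes lam mu alpha :: real and phi :: "real \<Rightarrow> real"
  assumes "lam > 0" and "mu > 0" and "alpha > 0"
    and "\<forall>T>0. phi T > 0"
    and "filterlim (\<lambda>T. phi T / T) at_top at_top"
  shows "LDP (\<lambda>T. measure_pmf (map_pmf (\<lambda>k. real k / phi T) (xi_law lam mu alpha T)))
             I2 (\<lambda>T. phi T * ln (phi T / T))"
proof -
  note lam = assms(1) and mu = assms(2) and al = assms(3) and pos = assms(4) and r = assms(5)
  define F where "F = (\<lambda>B T. eln (measure (xi_law lam mu alpha T) ((\<lambda>k. real k / phi T) -` B))
              / ereal (phi T * ln (phi T / T)))"
  have upper: "Limsup at_top (F B) \<le> - (INF x\<in>closure B. I2 x)" for B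
    unfolding F_def by (rule upper_bound[OF al pos r])
  have lower: "- (INF x\<in>interior B. I2 x) \<le> Liminf at_top (F B)" for B
  proof -
    define L where "L = Liminf at_top (F B)"
    have "- L \<le> I2 x" if x: "x \<in> interior B" for x
    proof (cases "x < 0")
      case True then show ?thesis by (simp add: I2_def)
    next
      case False
      then have x0: "x \<ge> 0" by simp
      obtain dl where dl: "dl > 0" "ball x dl \<subseteq> interior B"
        using x open_interior by (meson openE)
      have "- ereal x \<le> L"
      proof (rule ereal_le_epsilon2)
        fix e :: real assume e: "0 < e"
        define y where "y = x + min e dl / 2"
        have y: "y > 0" using x0 e dl by (simp add: y_def)
        have Bz: "z \<in> B" if "\<bar>z - y\<bar> < dl / 2" for z
        proof -
          have m1: "min e dl \<le> dl" "0 < min e dl" using e dl by auto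
          have "\<bar>x - z\<bar> < dl" using that m1 unfolding y_def abs_less_iff by linarith
          then have "dist x z < dl" by (simp add: dist_real_def)
          then have "z \<in> interior B" using dl by auto
          then show ?thesis using interior_subset[of B] by blast
        qed
        have "- ereal y \<le> L" unfolding L_def F_def
        proof (rule lower_core[OF lam mu al pos r y, of "dl / 2"])
          show "0 < dl / 2" using dl by simp
          show "z \<in> B" if "\<bar>z - y\<bar> < dl / 2" for z using Bz that .
        qed
        have "- ereal x \<le> - ereal y + ereal e" using e dl by (simp add: y_def)
        also have "\<dots> \<le> L + ereal e" using \<open>- ereal y \<le> L\<close> by (rule add_right_mono)
        finally show "- ereal x \<le> L + ereal e" .
      qed
      then have "- L \<le> ereal x" by (subst ereal_uminus_le_reorder) simp
      then show ?thesis using x0 by (simp add: I2_def)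
    qed
    then have "- L \<le> (INF x\<in>interior B. I2 x)" by (rule INF_greatest)
    then show ?thesis unfolding L_def by (subst ereal_uminus_le_reorder) simp
  qed
  show ?thesis unfolding LDP_def
  proof (intro conjI allI impI ballI)
    show "filterlim (\<lambda>T. phi T * ln (phi T / T)) at_top at_top" by (rule asym(3)[OF pos r])
    show "0 \<le> I2 x" for x by (simp add: I2_def)
    show "compact {x. I2 x \<le> ereal c}" if "c \<ge> 0" for c :: real
    proof -
      have "{x. I2 x \<le> ereal c} = {0..c}" by (auto simp: I2_def)
      then show ?thesis by simp
    qed
    fix B :: "real set" assume "B \<in> sets borel"
    show "Limsup at_top (\<lambda>T. eln (measure (measure_pmf (map_pmf (\<lambda>k. real k / phi T) (xi_law lam mu alpha T))) B) /
                 ereal (phi T * ln (phi T / T))) \<le> - (INF x\<in>closure B. I2 x)"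
      using upper[of B] by (simp add: F_def)
    show "- (INF x\<in>interior B. I2 x) \<le> Liminf at_top (\<lambda>T. eln (measure (measure_pmf (map_pmf (\<lambda>k. real k / phi T) (xi_law lam mu alpha T))) B) /
                 ereal (phi T * ln (phi T / T)))"
      using lower[of B] by (simp add: F_def)
  qed
qed

end
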